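(* Let $d\ge1$ and let $M\subseteq\mathbb{R}^d$ be a multirectangle. Every element of order $2$ in $\operatorname{Rec}_d(M)$ is a product of rectangle transpositions with pairwise disjoint supports.
   Context: A rectangle in $\mathbb{R}^d$ is a set $\prod_{i=1}^d[a_i,b_i)$ with $a_i<b_i$ real numbers. A multirectangle is a finite union of rectangles. For a multirectangle $M\subseteq\mathbb{R}^d$, $\operatorname{Rec}_d(M)$ denotes the group, under composition, of all bijections $f:M\to M$ for which there exists a finite partition of $M$ into rectangles such that the restriction of $f$ to each piece is a translation. A rectangle transposition is, for two disjoint rectangles $P,Q\subseteq M$ with $Q=P+v$, the element $\tau_{P,Q}$ that is translation by $v$ on $P$, by $-v$ on $Q$, and the identity elsewhere; its support is $P\cup Q$. *)

theory Defs
  imports "HOL-Analysis.Analysis"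
begin

text \<open>Points of R^d are modelled as \<open>real ^ 'd\<close> for a finite index type \<open>'d\<close>
  (so d = CARD('d) \<ge> 1 automatically).\<close>

definition is_rectangle :: "(real ^ 'd) set \<Rightarrow> bool" where
  "is_rectangle R \<longleftrightarrow> (\<exists>a b. (\<forall>i. a $ i < b $ i) \<and>
      R = {x. \<forall>i. a $ i \<le> x $ i \<and> x $ i < b $ i})"

definition is_multirectangle :: "(real ^ 'd) set \<Rightarrow> bool" where
  "is_multirectangle M \<longleftrightarrow> (\<exists>\<R>. finite \<R> \<and> (\<forall>R\<in>\<R>. is_rectangle R) \<and> M = \<Union>\<R>)"

text \<open>Elements of Rec_d(M), represented as maps on the whole space that are the
  identity outside M (so group composition is function composition).\<close>
definition in_Rec :: "(real ^ 'd) set \<Rightarrow> (real ^ 'd \<Rightarrow> real ^ 'd) \<Rightarrow> bool" where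
  "in_Rec M f \<longleftrightarrow> bij_betw f M M \<and> (\<forall>x. x \<notin> M \<longrightarrow> f x = x) \<and>
     (\<exists>\<P>. finite \<P> \<and> (\<forall>R\<in>\<P>. is_rectangle R) \<and> pairwise disjnt \<P> \<and> \<Union>\<P> = M \<and>
          (\<forall>R\<in>\<P>. \<exists>v. \<forall>x\<in>R. f x = x + v))"

definition rect_transp :: "(real ^ 'd) set \<Rightarrow> (real ^ 'd) set \<Rightarrow> real ^ 'd \<Rightarrow> real ^ 'd \<Rightarrow> real ^ 'd" where
  "rect_transp P Q v x = (if x \<in> P then x + v else if x \<in> Q then x - v else x)"

definition is_rect_transp_data :: "(real ^ 'd) set \<Rightarrow> (real ^ 'd) set \<times> (real ^ 'd) set \<times> (real ^ 'd) \<Rightarrow> bool" where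
  "is_rect_transp_data M t \<longleftrightarrow>
      is_rectangle (fst t) \<and> is_rectangle (fst (snd t)) \<and> fst t \<subseteq> M \<and> fst (snd t) \<subseteq> M \<and>
      disjnt (fst t) (fst (snd t)) \<and> fst (snd t) = (\<lambda>x. x + snd (snd t)) ` fst t"

definition transp_of :: "(real ^ 'd) set \<times> (real ^ 'd) set \<times> (real ^ 'd) \<Rightarrow> real ^ 'd \<Rightarrow> real ^ 'd" where
  "transp_of t = rect_transp (fst t) (fst (snd t)) (snd (snd t))"

definition transp_support :: "(real ^ 'd) set \<times> (real ^ 'd) set \<times> (real ^ 'd) \<Rightarrow> (real ^ 'd) set" where
  "transp_support t = fst t \<union> fst (snd t)"

end

theory Submission
  imports Defs
begin

lemma rect_nonempty: "is_rectangle R \<Longrightarrow> R \<noteq> {}"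
proof -
  assume "is_rectangle R"
  then obtain a b where ab: "\<forall>i. a $ i < b $ i" "R = {x. \<forall>i. a $ i \<le> x $ i \<and> x $ i < b $ i}"
    unfolding is_rectangle_def by blast
  then have "a \<in> R" by auto
  then show ?thesis by auto
qed

lemma rect_inter:
  assumes "is_rectangle R" "is_rectangle S" "R \<inter> S \<noteq> {}"
  shows "is_rectangle (R \<inter> S)"
proof -
  obtain a b where ab: "\<forall>i. a $ i < b $ i" "R = {x. \<forall>i. a $ i \<le> x $ i \<and> x $ i < b $ i}"
    using assms(1) unfolding is_rectangle_def by blast
  obtain c d where cd: "\<forall>i. c $ i < d $ i" "S = {x. \<forall>i. c $ i \<le> x $ i \<and> x $ i < d $ i}"
    using assms(2) unfolding is_rectangle_def by blast
  obtain y where y: "y \<in> R" "y \<in> S" using assms(3) by blast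
  define p where "p = (\<chi> i. max (a $ i) (c $ i))"
  define q where "q = (\<chi> i. min (b $ i) (d $ i))"
  have "\<forall>i. p $ i < q $ i"
  proof
    fix i
    have h1: "a $ i \<le> y $ i" "y $ i < b $ i" using y(1) ab(2) by auto
    have h2: "c $ i \<le> y $ i" "y $ i < d $ i" using y(2) cd(2) by auto
    show "p $ i < q $ i" unfolding p_def q_def using h1 h2 by simp
  qed
  moreover have "R \<inter> S = {x. \<forall>i. p $ i \<le> x $ i \<and> x $ i < q $ i}"
    unfolding p_def q_def using ab cd by auto
  ultimately show ?thesis unfolding is_rectangle_def by blast
qed

lemma rect_shift_pre:
  assumes "is_rectangle S"
  shows "is_rectangle {x. x + v \<in> S}"
proof -
  obtain c d where cd: "\<forall>i. c $ i < d $ i" "S = {x. \<forall>i. c $ i \<le> x $ i \<and> x $ i < d $ i}"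
    using assms unfolding is_rectangle_def by blast
  have "\<forall>i. (c - v) $ i < (d - v) $ i" using cd by auto
  moreover have "{x. x + v \<in> S} = {x. \<forall>i. (c - v) $ i \<le> x $ i \<and> x $ i < (d - v) $ i}"
    unfolding cd(2) by (simp add: algebra_simps)
  ultimately show ?thesis unfolding is_rectangle_def by blast
qed

lemma rect_shift_img:
  assumes "is_rectangle S"
  shows "is_rectangle ((\<lambda>x. x + v) ` S)"
proof -
  have "(\<lambda>x. x + v) ` S = {x. x + (- v) \<in> S}"
    by (auto simp: image_iff) (metis add.commute add_diff_cancel_left' diff_add_cancel uminus_add_conv_diff)
  then show ?thesis using rect_shift_pre[OF assms, of "-v"] by simp
qed

lemma pw_cons:
  assumes "\<forall>i<length ts. \<forall>j<length ts. i\<noteq>j \<longrightarrow> P (ts!i) (ts!j)"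
    and "\<forall>s\<in>set ts. P t s \<and> P s t"
  shows "\<forall>i<length (t#ts). \<forall>j<length (t#ts). i\<noteq>j \<longrightarrow> P ((t#ts)!i) ((t#ts)!j)"
proof (intro allI impI)
  fix i j assume h: "i < length (t#ts)" "j < length (t#ts)" "i \<noteq> j"
  show "P ((t#ts)!i) ((t#ts)!j)"
  proof (cases i)
    case 0
    then obtain j' where "j = Suc j'" using h by (cases j) auto
    then show ?thesis using 0 h assms(2) by auto
  next
    case (Suc i')
    show ?thesis
    proof (cases j)
      case 0 then show ?thesis using Suc h assms(2) by auto
    next
      case (Suc j') then show ?thesis using \<open>i = Suc i'\<close> h assms(1) by auto
    qed
  qed
qed

lemma main_ind:
  fixes f :: "real^'d \<Rightarrow> real^'d"
  assumes ff: "f \<circ> f = id"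
  shows "finite Q \<Longrightarrow> pairwise disjnt Q \<Longrightarrow>
    (\<forall>R\<in>Q. is_rectangle R \<and> R \<subseteq> M \<and> (\<exists>v. \<forall>x\<in>R. f x = x+v) \<and> f`R \<in> Q) \<Longrightarrow>
    \<exists>ts. (\<forall>t\<in>set ts. is_rect_transp_data M t \<and> transp_support t \<subseteq> \<Union>Q) \<and>
      (\<forall>i<length ts. \<forall>j<length ts. i\<noteq>j \<longrightarrow> disjnt (transp_support (ts ! i)) (transp_support (ts ! j))) \<and>
      (\<forall>x. foldr (\<circ>) (map transp_of ts) id x = (if x \<in> \<Union>Q then f x else x))"
proof (induction "card Q" arbitrary: Q rule: less_induct)
  case less
  have f2: "\<And>x. f (f x) = x" using ff by (metis comp_apply id_apply)
  have fimg2: "\<And>A. f ` (f ` A) = A" using f2 by (simp add: image_image)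
  show ?case
  proof (cases "Q = {}")
    case True
    then show ?thesis by (intro exI[of _ "[]"]) auto
  next
    case False
    then obtain Q0 where Q0: "Q0 \<in> Q" by blast
    then obtain v where v: "\<forall>x\<in>Q0. f x = x + v" using less.prems(3) by blast
    have Q1Q: "f ` Q0 \<in> Q" using Q0 less.prems(3) by blast
    have disjQ: "\<And>R S. R \<in> Q \<Longrightarrow> S \<in> Q \<Longrightarrow> R \<noteq> S \<Longrightarrow> R \<inter> S = {}"
      using less.prems(2) unfolding pairwise_def disjnt_def by blast
    show ?thesis
    proof (cases "f ` Q0 = Q0")
      case True
      define Q' where "Q' = Q - {Q0}"
      have cardlt: "card Q' < card Q" unfolding Q'_def using card_Diff1_less[OF less.prems(1) Q0] .
      have "\<forall>R\<in>Q'. is_rectangle R \<and> R \<subseteq> M \<and> (\<exists>v. \<forall>x\<in>R. f x = x+v) \<and> f`R \<in> Q'"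
      proof
        fix R assume R: "R \<in> Q'"
        have "f ` R \<noteq> Q0" using R True fimg2 unfolding Q'_def by (metis DiffE singletonI)
        then show "is_rectangle R \<and> R \<subseteq> M \<and> (\<exists>v. \<forall>x\<in>R. f x = x+v) \<and> f`R \<in> Q'"
          using R less.prems(3) unfolding Q'_def by auto
      qed
      moreover have "finite Q'" "pairwise disjnt Q'" using less.prems(1,2) unfolding Q'_def
        by (auto simp: pairwise_def)
      ultimately obtain ts where ts:
        "\<forall>t\<in>set ts. is_rect_transp_data M t \<and> transp_support t \<subseteq> \<Union>Q'"
        "\<forall>i<length ts. \<forall>j<length ts. i\<noteq>j \<longrightarrow> disjnt (transp_support (ts ! i)) (transp_support (ts ! j))"
        "\<forall>x. foldr (\<circ>) (map transp_of ts) id x = (if x \<in> \<Union>Q' then f x else x)"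
        using less.hyps[OF cardlt] by blast
      have fix0: "\<And>x. x \<in> Q0 \<Longrightarrow> f x = x"
      proof -
        fix x assume x: "x \<in> Q0"
        have fx: "f x \<in> Q0" using x True by blast
        have e1: "f (f x) = f x + v" using v fx by blast
        have e2: "f x = x + v" using v x by blast
        have "x = x + v + v" using f2[of x] e1 e2 by simp
        then have "v + v = 0" by (simp add: add.assoc)
        then have "v = 0" by (metis scaleR_2 scaleR_eq_0_iff zero_neq_numeral)
        then show "f x = x" using v x by simp
      qed
      have UQ: "\<Union>Q = Q0 \<union> \<Union>Q'" unfolding Q'_def using Q0 by blast
      have dj: "Q0 \<inter> \<Union>Q' = {}" unfolding Q'_def using disjQ Q0 by blast
      show ?thesis
      proof (intro exI[of _ ts] conjI)
        show "\<forall>t\<in>set ts. is_rect_transp_data M t \<and> transp_support t \<subseteq> \<Union>Q"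
          using ts(1) UQ by blast
        show "\<forall>i<length ts. \<forall>j<length ts. i\<noteq>j \<longrightarrow> disjnt (transp_support (ts ! i)) (transp_support (ts ! j))"
          using ts(2) .
        show "\<forall>x. foldr (\<circ>) (map transp_of ts) id x = (if x \<in> \<Union>Q then f x else x)"
          using ts(3) UQ dj fix0 by auto
      qed
    next
      case False
      define Q1 where "Q1 = f ` Q0"
      define Q' where "Q' = Q - {Q0, Q1}"
      have Q1: "Q1 \<in> Q" using Q1Q Q1_def by simp
      have ne: "Q1 \<noteq> Q0" using False Q1_def by simp
      have cardlt: "card Q' < card Q" unfolding Q'_def using Q0 less.prems(1)
        by (intro psubset_card_mono) auto
      have "\<forall>R\<in>Q'. is_rectangle R \<and> R \<subseteq> M \<and> (\<exists>v. \<forall>x\<in>R. f x = x+v) \<and> f`R \<in> Q'"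
      proof
        fix R assume R: "R \<in> Q'"
        have "f ` R \<noteq> Q0" using R fimg2 unfolding Q'_def Q1_def by (metis DiffE insertI2 singletonI)
        moreover have "f ` R \<noteq> Q1" using R fimg2 unfolding Q'_def Q1_def by (metis DiffE insertI1)
        ultimately show "is_rectangle R \<and> R \<subseteq> M \<and> (\<exists>v. \<forall>x\<in>R. f x = x+v) \<and> f`R \<in> Q'"
          using R less.prems(3) unfolding Q'_def by auto
      qed
      moreover have "finite Q'" "pairwise disjnt Q'" using less.prems(1,2) unfolding Q'_def
        by (auto simp: pairwise_def)
      ultimately obtain ts where ts:
        "\<forall>t\<in>set ts. is_rect_transp_data M t \<and> transp_support t \<subseteq> \<Union>Q'"
        "\<forall>i<length ts. \<forall>j<length ts. i\<noteq>j \<longrightarrow> disjnt (transp_support (ts ! i)) (transp_support (ts ! j))"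
        "\<forall>x. foldr (\<circ>) (map transp_of ts) id x = (if x \<in> \<Union>Q' then f x else x)"
        using less.hyps[OF cardlt] by blast
      have UQ: "\<Union>Q = Q0 \<union> Q1 \<union> \<Union>Q'" unfolding Q'_def using Q0 Q1 by blast
      have dj0: "Q0 \<inter> \<Union>Q' = {}" unfolding Q'_def using disjQ Q0 by blast
      have dj1: "Q1 \<inter> \<Union>Q' = {}" unfolding Q'_def using disjQ Q1 by blast
      have dj01: "Q0 \<inter> Q1 = {}" using disjQ Q0 Q1 ne by blast
      have Q1eq: "Q1 = (\<lambda>x. x + v) ` Q0" unfolding Q1_def using v by auto
      have closedQ': "\<And>x. x \<in> \<Union>Q' \<Longrightarrow> f x \<in> \<Union>Q'"
      proof -
        fix x assume "x \<in> \<Union>Q'"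
        then obtain R where "R \<in> Q'" "x \<in> R" by blast
        moreover have "f ` R \<in> Q'"
        proof -
          have "f ` R \<noteq> Q0" using \<open>R \<in> Q'\<close> fimg2 unfolding Q'_def Q1_def by (metis DiffE insertI2 singletonI)
          moreover have "f ` R \<noteq> Q1" using \<open>R \<in> Q'\<close> fimg2 unfolding Q'_def Q1_def by (metis DiffE insertI1)
          ultimately show ?thesis using \<open>R \<in> Q'\<close> less.prems(3) unfolding Q'_def by auto
        qed
        ultimately show "f x \<in> \<Union>Q'" by blast
      qed
      define t where "t = (Q0, Q1, v)"
      have tdata: "is_rect_transp_data M t"
        unfolding is_rect_transp_data_def t_def using less.prems(3) Q0 Q1 dj01 Q1eq
        by (auto simp: disjnt_def)
      have tsupp: "transp_support t = Q0 \<union> Q1" unfolding transp_support_def t_def by simp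
      show ?thesis
      proof (intro exI[of _ "t # ts"] conjI)
        show "\<forall>s\<in>set (t#ts). is_rect_transp_data M s \<and> transp_support s \<subseteq> \<Union>Q"
          using ts(1) UQ tdata tsupp by auto
        show "\<forall>i<length (t#ts). \<forall>j<length (t#ts). i\<noteq>j \<longrightarrow> disjnt (transp_support ((t#ts) ! i)) (transp_support ((t#ts) ! j))"
        proof (rule pw_cons[OF ts(2)])
          show "\<forall>s\<in>set ts. disjnt (transp_support t) (transp_support s) \<and> disjnt (transp_support s) (transp_support t)"
            using ts(1) tsupp dj0 dj1 unfolding disjnt_def by blast
        qed
        show "\<forall>x. foldr (\<circ>) (map transp_of (t#ts)) id x = (if x \<in> \<Union>Q then f x else x)"
        proof
          fix x
          have fo: "foldr (\<circ>) (map transp_of (t#ts)) id x = rect_transp Q0 Q1 v (foldr (\<circ>) (map transp_of ts) id x)"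
            by (simp add: t_def transp_of_def)
          show "foldr (\<circ>) (map transp_of (t#ts)) id x = (if x \<in> \<Union>Q then f x else x)"
          proof (cases "x \<in> Q0")
            case True
            then show ?thesis using fo ts(3) dj0 v UQ by (auto simp: rect_transp_def)
          next
            case nQ0: False
            show ?thesis
            proof (cases "x \<in> Q1")
              case True
              then obtain y where y: "y \<in> Q0" "x = f y" unfolding Q1_def by blast
              have "f x = x - v" using y v f2 by (metis add_diff_cancel)
              then show ?thesis using fo ts(3) dj1 True nQ0 UQ by (auto simp: rect_transp_def)
            next
              case nQ1: False
              show ?thesis
              proof (cases "x \<in> \<Union>Q'")
                case True
                have "f x \<notin> Q0" "f x \<notin> Q1" using closedQ'[OF True] dj0 dj1 by auto
                then show ?thesis using fo ts(3) True UQ by (auto simp: rect_transp_def)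
              next
                case False
                then show ?thesis using fo ts(3) nQ0 nQ1 UQ by (auto simp: rect_transp_def)
              qed
            qed
          qed
        qed
      qed
    qed
  qed
qed

theorem mainTheorem5:
  fixes M :: "(real ^ 'd) set" and f :: "real ^ 'd \<Rightarrow> real ^ 'd"
  assumes "is_multirectangle M"
    and "in_Rec M f"
    and "f \<circ> f = id" and "f \<noteq> id"
  shows "\<exists>ts. (\<forall>t\<in>set ts. is_rect_transp_data M t) \<and>
           (\<forall>i<length ts. \<forall>j<length ts. i \<noteq> j \<longrightarrow>
               disjnt (transp_support (ts ! i)) (transp_support (ts ! j))) \<and>
           f = foldr (\<circ>) (map transp_of ts) id"
proof -
  have f2: "\<And>x. f (f x) = x" using assms(3) by (metis comp_apply id_apply)
  obtain P where P: "finite P" "\<forall>R\<in>P. is_rectangle R" "pairwise disjnt P" "\<Union>P = M"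
      "\<forall>R\<in>P. \<exists>v. \<forall>x\<in>R. f x = x + v"
    using assms(2) unfolding in_Rec_def by blast
  have bij: "bij_betw f M M" and outside: "\<And>x. x \<notin> M \<Longrightarrow> f x = x"
    using assms(2) unfolding in_Rec_def by auto
  have fM: "\<And>x. x \<in> M \<Longrightarrow> f x \<in> M" using bij bij_betwE by blast
  have disjP: "\<And>R S. R \<in> P \<Longrightarrow> S \<in> P \<Longrightarrow> R \<noteq> S \<Longrightarrow> R \<inter> S = {}"
    using P(3) unfolding pairwise_def disjnt_def by blast
  define Q where "Q = (\<lambda>(R,S). R \<inter> f -` S) ` (P \<times> P) - {{}}"
  have memQ: "\<And>A. A \<in> Q \<longleftrightarrow> (\<exists>R S. R \<in> P \<and> S \<in> P \<and> A = R \<inter> f -` S \<and> A \<noteq> {})"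
    unfolding Q_def by auto
  have finQ: "finite Q" unfolding Q_def using P(1) by auto
  have pwQ: "pairwise disjnt Q"
    unfolding pairwise_def disjnt_def
  proof (intro ballI impI)
    fix A B assume A: "A \<in> Q" and B: "B \<in> Q" and ne: "A \<noteq> B"
    obtain R S where RS: "R \<in> P" "S \<in> P" "A = R \<inter> f -` S" using A memQ by blast
    obtain R' S' where RS': "R' \<in> P" "S' \<in> P" "B = R' \<inter> f -` S'" using B memQ by blast
    show "A \<inter> B = {}"
    proof (rule ccontr)
      assume "A \<inter> B \<noteq> {}"
      then obtain x where x: "x \<in> R" "x \<in> R'" "f x \<in> S" "f x \<in> S'" using RS RS' by blast
      have "R = R'" using x disjP RS RS' by blast
      moreover have "S = S'" using x disjP RS RS' by blast
      ultimately show False using ne RS RS' by simp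
    qed
  qed
  have propQ: "\<forall>A\<in>Q. is_rectangle A \<and> A \<subseteq> M \<and> (\<exists>v. \<forall>x\<in>A. f x = x+v) \<and> f`A \<in> Q"
  proof
    fix A assume A: "A \<in> Q"
    obtain R S where RS: "R \<in> P" "S \<in> P" "A = R \<inter> f -` S" "A \<noteq> {}" using A memQ by blast
    obtain v where v: "\<forall>x\<in>R. f x = x + v" using P(5) RS(1) by blast
    have Aeq: "A = R \<inter> {x. x + v \<in> S}" using RS(3) v by auto
    have rect: "is_rectangle A"
    proof -
      have "is_rectangle (R \<inter> {x. x + v \<in> S})"
      proof (rule rect_inter)
        show "is_rectangle R" using P(2) RS(1) by blast
        show "is_rectangle {x. x + v \<in> S}" using rect_shift_pre P(2) RS(2) by blast
        show "R \<inter> {x. x + v \<in> S} \<noteq> {}" using RS(4) Aeq by simp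
      qed
      then show ?thesis using Aeq by simp
    qed
    have sub: "A \<subseteq> M" using RS P(4) by auto
    have img: "f ` A = S \<inter> f -` R"
    proof
      show "f ` A \<subseteq> S \<inter> f -` R" using RS(3) f2 by auto
      show "S \<inter> f -` R \<subseteq> f ` A"
      proof
        fix y assume y: "y \<in> S \<inter> f -` R"
        then have "f y \<in> A" using RS(3) f2 by auto
        then show "y \<in> f ` A" using f2 by (metis image_eqI)
      qed
    qed
    have "f ` A \<noteq> {}" using RS(4) by auto
    then have "f ` A \<in> Q" using memQ img RS by blast
    then show "is_rectangle A \<and> A \<subseteq> M \<and> (\<exists>v. \<forall>x\<in>A. f x = x+v) \<and> f`A \<in> Q"
      using rect sub v RS(3) by blast
  qed
  have UQ: "\<Union>Q = M"
  proof
    show "\<Union>Q \<subseteq> M" using propQ by blast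
    show "M \<subseteq> \<Union>Q"
    proof
      fix x assume x: "x \<in> M"
      obtain R where R: "R \<in> P" "x \<in> R" using x P(4) by blast
      obtain S where S: "S \<in> P" "f x \<in> S" using fM[OF x] P(4) by blast
      have "R \<inter> f -` S \<in> Q" using memQ R S by blast
      then show "x \<in> \<Union>Q" using R S by blast
    qed
  qed
  obtain ts where ts:
    "\<forall>t\<in>set ts. is_rect_transp_data M t \<and> transp_support t \<subseteq> \<Union>Q"
    "\<forall>i<length ts. \<forall>j<length ts. i\<noteq>j \<longrightarrow> disjnt (transp_support (ts ! i)) (transp_support (ts ! j))"
    "\<forall>x. foldr (\<circ>) (map transp_of ts) id x = (if x \<in> \<Union>Q then f x else x)"
    using main_ind[OF assms(3) finQ pwQ propQ] by blast
  have "f = foldr (\<circ>) (map transp_of ts) id"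
  proof
    fix x show "f x = foldr (\<circ>) (map transp_of ts) id x"
      using ts(3) UQ outside by auto
  qed
  then show ?thesis using ts(1,2) by blast
qed

end
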